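(* Let $T\in\mathcal C(\rho)$ and define $\psi\colon G\times Y\times Y\to\mathbb C$ by $\psi(u,v,y)=(TK_{0,y})(u,v)$. Then $\psi\in\mathcal A$ and $T=S_\psi$.
   Context: Let $G$ be a locally compact abelian group (written additively) with Haar measure $\nu$, and $(Y,\lambda)$ a measure space. Let $H$ be a reproducing kernel Hilbert space of complex functions on $G\times Y$ whose inner product is that of $L^2(G\times Y,\nu\otimes\lambda)$, with reproducing kernel $(K_{x,y})_{(x,y)\in G\times Y}$ (so $f(x,y)=\langle f,K_{x,y}\rangle$). Assume $K_{x,y}(u,v)=K_{0,y}(u-x,v)$ for all $u,x\in G$, $v,y\in Y$. For $a\in G$ let $(\rho(a)f)(x,y)=f(x-a,y)$ and $\mathcal C(\rho)=\{S\in\mathcal B(H): S\rho(a)=\rho(a)S\ \forall a\in G\}$. Let $\mathcal A_0$ be the set of functions $\psi\colon G\times Y\times Y\to\mathbb C$ such that $\psi(\cdot,\cdot,v)\in H$ for every $v\in Y$ and $(u,v)\mapsto\overline{\psi(-u,y,v)}$ belongs to $H$ for every $y\in Y$. For $\psi\in\mathcal A_0$, $f\in H$, define $(S_\psi f)(x,y)=\int_{G\times Y}f(u,v)\psi(x-u,y,v)\,d\nu(u)\,d\lambda(v)$. Let $\mathcal A$ be the set of $\psi\in\mathcal A_0$ such that $S_\psi f\in H$ for all $f\in H$ and $S_\psi$ is bounded on $H$. *)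

theory Defs
  imports "HOL-Analysis.Analysis"
begin

definition haar_measure :: "'g::{topological_ab_group_add,t2_space} measure \<Rightarrow> bool" where
  "haar_measure nu \<longleftrightarrow>
     sets nu = sets borel \<and>
     (\<forall>a A. A \<in> sets borel \<longrightarrow> emeasure nu ((\<lambda>x. a + x) ` A) = emeasure nu A) \<and>
     (\<forall>C. compact C \<longrightarrow> emeasure nu C < \<infinity>) \<and>
     (\<forall>A \<in> sets borel. emeasure nu A = (INF U \<in> {U. open U \<and> A \<subseteq> U}. emeasure nu U)) \<and>
     (\<forall>U. open U \<longrightarrow> emeasure nu U = (SUP C \<in> {C. compact C \<and> C \<subseteq> U}. emeasure nu C)) \<and>
     (\<exists>U. open U \<and> emeasure nu U \<noteq> 0)"

definition l2ip :: "'a measure \<Rightarrow> ('a \<Rightarrow> complex) \<Rightarrow> ('a \<Rightarrow> complex) \<Rightarrow> complex" where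
  "l2ip M f g = (LINT z|M. f z * cnj (g z))"

definition l2norm :: "'a measure \<Rightarrow> ('a \<Rightarrow> complex) \<Rightarrow> real" where
  "l2norm M f = sqrt (LINT z|M. (cmod (f z))\<^sup>2)"

definition rkhs_L2 :: "'a measure \<Rightarrow> ('a \<Rightarrow> complex) set \<Rightarrow> ('a \<Rightarrow> 'a \<Rightarrow> complex) \<Rightarrow> bool" where
  "rkhs_L2 M H K \<longleftrightarrow>
     (\<forall>f \<in> H. f \<in> borel_measurable M \<and> integrable M (\<lambda>z. (cmod (f z))\<^sup>2)) \<and>
     (\<lambda>z. 0) \<in> H \<and>
     (\<forall>f \<in> H. \<forall>g \<in> H. (\<lambda>z. f z + g z) \<in> H) \<and>
     (\<forall>c. \<forall>f \<in> H. (\<lambda>z. c * f z) \<in> H) \<and>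
     (\<forall>s. (\<forall>n. s n \<in> H) \<and>
          (\<forall>e>0. \<exists>N. \<forall>m\<ge>N. \<forall>n\<ge>N. l2norm M (\<lambda>z. s m z - s n z) < e)
          \<longrightarrow> (\<exists>f \<in> H. (\<lambda>n. l2norm M (\<lambda>z. s n z - f z)) \<longlonglongrightarrow> 0)) \<and>
     (\<forall>p. K p \<in> H) \<and>
     (\<forall>f \<in> H. \<forall>p. f p = l2ip M f (K p))"

definition bounded_op :: "'a measure \<Rightarrow> ('a \<Rightarrow> complex) set \<Rightarrow> (('a \<Rightarrow> complex) \<Rightarrow> ('a \<Rightarrow> complex)) \<Rightarrow> bool" where
  "bounded_op M H S \<longleftrightarrow>
     (\<forall>f \<in> H. S f \<in> H) \<and>
     (\<forall>f \<in> H. \<forall>g \<in> H. S (\<lambda>z. f z + g z) = (\<lambda>z. S f z + S g z)) \<and>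
     (\<forall>c. \<forall>f \<in> H. S (\<lambda>z. c * f z) = (\<lambda>z. c * S f z)) \<and>
     (\<exists>C. \<forall>f \<in> H. l2norm M (S f) \<le> C * l2norm M f)"

definition rho :: "'g::ab_group_add \<Rightarrow> ('g \<times> 'y \<Rightarrow> complex) \<Rightarrow> ('g \<times> 'y \<Rightarrow> complex)" where
  "rho a f = (\<lambda>(x, y). f (x - a, y))"

definition commutant_rho :: "('g::ab_group_add \<times> 'y) measure \<Rightarrow> ('g \<times> 'y \<Rightarrow> complex) set
    \<Rightarrow> (('g \<times> 'y \<Rightarrow> complex) \<Rightarrow> ('g \<times> 'y \<Rightarrow> complex)) set" where
  "commutant_rho M H = {S. bounded_op M H S \<and> (\<forall>a. \<forall>f \<in> H. S (rho a f) = rho a (S f))}"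

text \<open>The class A_0; psi u y v stands for psi(u,y,v).\<close>
definition A0 :: "('g::ab_group_add \<times> 'y \<Rightarrow> complex) set \<Rightarrow> ('g \<Rightarrow> 'y \<Rightarrow> 'y \<Rightarrow> complex) set" where
  "A0 H = {psi. (\<forall>v. (\<lambda>(u, w). psi u w v) \<in> H) \<and>
                (\<forall>y. (\<lambda>(u, v). cnj (psi (- u) y v)) \<in> H)}"

definition S_psi :: "('g::ab_group_add \<times> 'y) measure \<Rightarrow> ('g \<Rightarrow> 'y \<Rightarrow> 'y \<Rightarrow> complex)
    \<Rightarrow> ('g \<times> 'y \<Rightarrow> complex) \<Rightarrow> ('g \<times> 'y \<Rightarrow> complex)" where
  "S_psi M psi f = (\<lambda>(x, y). LINT z|M. f z * psi (x - fst z) y (snd z))"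

definition A_class :: "('g::ab_group_add \<times> 'y) measure \<Rightarrow> ('g \<times> 'y \<Rightarrow> complex) set
    \<Rightarrow> ('g \<Rightarrow> 'y \<Rightarrow> 'y \<Rightarrow> complex) set" where
  "A_class M H = {psi \<in> A0 H. bounded_op M H (S_psi M psi)}"

end

theory Submission imports Defs begin

lemma pw_expand: "(cmod (a+b))^2 = (cmod a)^2 + (cmod b)^2 + 2 * Re (a * cnj b)"
  unfolding cmod_power2 by (simp add: power2_eq_square algebra_simps)

lemma pw_par: "(cmod (a-b))^2 = 2*(cmod a)^2 + 2*(cmod b)^2 - 4 * (cmod (of_real (1/2) * (a+b)))^2"
  unfolding cmod_power2 by (simp add: power2_eq_square field_simps)

lemma pw_amgm: assumes "t > 0" shows "cmod a * cmod b \<le> (t * (cmod a)^2 + (cmod b)^2 / t) / 2"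
proof -
  have "0 \<le> (t * cmod a - cmod b)^2" by simp
  then have "2 * t * (cmod a * cmod b) \<le> t * (t * (cmod a)^2) + (cmod b)^2"
    by (simp add: power2_eq_square algebra_simps)
  then show ?thesis using assms by (simp add: field_simps power2_eq_square)
qed

lemma real_amgm_inf:
  fixes x a b :: real
  assumes "a \<ge> 0" "b \<ge> 0" "\<And>t. t > 0 \<Longrightarrow> x \<le> (t * a + b / t) / 2"
  shows "x \<le> sqrt a * sqrt b"
proof (cases "a > 0 \<and> b > 0")
  case True
  have "x \<le> ((sqrt b / sqrt a) * a + b / (sqrt b / sqrt a)) / 2"
    using True by (intro assms(3)) auto
  also have "\<dots> = sqrt a * sqrt b" using True
    by (simp add: field_simps)
  finally show ?thesis .
next
  case False
  then have z: "a = 0 \<or> b = 0" using assms by auto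
  show ?thesis
  proof (rule ccontr)
    assume "\<not> ?thesis"
    then have xp: "x > 0" using z by auto
    show False
    proof (cases "a = 0")
      case True
      have "x \<le> (((b+1)/x) * a + b / ((b+1)/x)) / 2" using xp assms by (intro assms(3)) auto
      also have "\<dots> = x * (b / (b+1)) / 2" using True xp assms by (simp add: field_simps)
      also have "\<dots> < x" using xp assms by (simp add: field_simps) (simp add: add_nonneg_pos)
      finally show False by simp
    next
      case False
      then have b0: "b = 0" using z by auto
      have "x \<le> ((x/(a+1)) * a + b / (x/(a+1))) / 2" using xp assms by (intro assms(3)) auto
      also have "\<dots> = x * (a / (a+1)) / 2" using b0 xp assms by (simp add: field_simps)
      also have "\<dots> < x" using xp assms by (simp add: field_simps) (simp add: add_nonneg_pos)
      finally show False by simp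
    qed
  qed
qed

lemma lin3: fixes A B R :: "'a \<Rightarrow> real"
  assumes "integrable M A" "integrable M B" "integrable M R" shows
  "(LINT z|M. A z + B z + c * R z) = (LINT z|M. A z) + (LINT z|M. B z) + c * (LINT z|M. R z)"
proof -
  have i: "integrable M (\<lambda>z. A z + B z)" "integrable M (\<lambda>z. c * R z)" using assms by auto
  show ?thesis
    using Bochner_Integration.integral_add[OF i] Bochner_Integration.integral_add[OF assms(1,2)] by simp
qed

lemma lin3': fixes A B R :: "'a \<Rightarrow> real"
  assumes "integrable M A" "integrable M B" "integrable M R" shows
  "(LINT z|M. a * A z + b * B z - c * R z) = a * (LINT z|M. A z) + b * (LINT z|M. B z) - c * (LINT z|M. R z)"
proof -
  have i: "integrable M (\<lambda>z. a * A z + b * B z)" "integrable M (\<lambda>z. c * R z)"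
     "integrable M (\<lambda>z. a * A z)" "integrable M (\<lambda>z. b * B z)" using assms by auto
  show ?thesis
    using Bochner_Integration.integral_diff[OF i(1,2)] Bochner_Integration.integral_add[OF i(3,4)] by simp
qed

definition Qn :: "'a measure \<Rightarrow> ('a \<Rightarrow> complex) \<Rightarrow> real" where
  "Qn M f = (LINT z|M. (cmod (f z))\<^sup>2)"

context
  fixes M :: "'a measure" and H and K
  assumes rk: "rkhs_L2 M H K"
begin

lemma H_meas: "f \<in> H \<Longrightarrow> f \<in> borel_measurable M"
  using rk unfolding rkhs_L2_def by auto
lemma H_sq: "f \<in> H \<Longrightarrow> integrable M (\<lambda>z. (cmod (f z))\<^sup>2)"
  using rk unfolding rkhs_L2_def by auto
lemma H_zero: "(\<lambda>z. 0) \<in> H"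
  using rk unfolding rkhs_L2_def by auto
lemma H_add: "f \<in> H \<Longrightarrow> g \<in> H \<Longrightarrow> (\<lambda>z. f z + g z) \<in> H"
  using rk unfolding rkhs_L2_def by auto
lemma H_scale: "f \<in> H \<Longrightarrow> (\<lambda>z. c * f z) \<in> H"
  using rk unfolding rkhs_L2_def by auto
lemma H_diff: "f \<in> H \<Longrightarrow> g \<in> H \<Longrightarrow> (\<lambda>z. f z - g z) \<in> H"
proof -
  assume a: "f \<in> H" "g \<in> H"
  have "(\<lambda>z. f z + (-1) * g z) \<in> H" using a H_add H_scale by blast
  then show ?thesis by simp
qed
lemma H_K: "K p \<in> H"
  using rk unfolding rkhs_L2_def by auto
lemma H_repr: "f \<in> H \<Longrightarrow> f p = l2ip M f (K p)"
  using rk unfolding rkhs_L2_def by auto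
lemma H_complete: "(\<And>n. s n \<in> H) \<Longrightarrow>
          (\<And>e. e>0 \<Longrightarrow> \<exists>N. \<forall>m\<ge>N. \<forall>n\<ge>N. l2norm M (\<lambda>z. s m z - s n z) < e)
          \<Longrightarrow> (\<exists>f \<in> H. (\<lambda>n. l2norm M (\<lambda>z. s n z - f z)) \<longlonglongrightarrow> 0)"
  using rk unfolding rkhs_L2_def by blast

lemma ip_integrable: assumes "f \<in> H" "g \<in> H"
  shows "integrable M (\<lambda>z. f z * cnj (g z))"
proof (rule Bochner_Integration.integrable_bound)
  show "integrable M (\<lambda>z. (cmod (f z))\<^sup>2 + (cmod (g z))\<^sup>2)"
    using H_sq assms by auto
  have "(\<lambda>z. cnj (g z)) \<in> borel_measurable M"
    by (rule borel_measurable_continuous_on[OF linear_continuous_on[OF bounded_linear_cnj] H_meas[OF assms(2)]])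
  then show "(\<lambda>z. f z * cnj (g z)) \<in> borel_measurable M"
    using H_meas[OF assms(1)] by measurable
  show "AE z in M. norm (f z * cnj (g z)) \<le> norm ((cmod (f z))\<^sup>2 + (cmod (g z))\<^sup>2)"
  proof (intro AE_I2)
    fix z
    have "cmod (f z) * cmod (g z) \<le> ((cmod (f z))\<^sup>2 + (cmod (g z))\<^sup>2)"
    proof -
      have "cmod (f z) * cmod (g z) \<le> ((cmod (f z))\<^sup>2 + (cmod (g z))\<^sup>2) / 2"
        using pw_amgm[of 1 "f z" "g z"] by simp
      moreover have "((cmod (f z))\<^sup>2 + (cmod (g z))\<^sup>2) / 2 \<le> ((cmod (f z))\<^sup>2 + (cmod (g z))\<^sup>2)"
        by simp
      ultimately show ?thesis by (rule order.trans)
    qed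
    then show "norm (f z * cnj (g z)) \<le> norm ((cmod (f z))\<^sup>2 + (cmod (g z))\<^sup>2)"
      by (simp add: norm_mult)
  qed
qed

lemma Qn_nonneg: "Qn M f \<ge> 0"
  unfolding Qn_def by (rule integral_nonneg_AE) auto

lemma l2norm_Qn: "l2norm M f = sqrt (Qn M f)"
  unfolding l2norm_def Qn_def ..

lemma Qn_l2norm: "Qn M f = (l2norm M f)^2"
  using Qn_nonneg by (simp add: l2norm_Qn)

lemma ip_self: "l2ip M f f = of_real (Qn M f)"
proof -
  have e: "(\<lambda>z. f z * cnj (f z)) = (\<lambda>z. complex_of_real ((cmod (f z))^2))"
    by (simp add: fun_eq_iff complex_norm_square[symmetric] del: of_real_power)
  show ?thesis unfolding l2ip_def Qn_def e by (rule integral_complex_of_real)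
qed

lemma ip_cnj: "l2ip M g f = cnj (l2ip M f g)"
proof -
  have "l2ip M g f = (CLINT z|M. cnj (f z * cnj (g z)))" unfolding l2ip_def by (simp add: mult.commute)
  also have "\<dots> = cnj (l2ip M f g)" unfolding l2ip_def by (rule Bochner_Integration.integral_cnj)
  finally show ?thesis .
qed

lemma ip_scale_right: "l2ip M f (\<lambda>z. c * g z) = cnj c * l2ip M f g"
  unfolding l2ip_def by (simp add: mult.left_commute)

lemma ip_scale_left: "l2ip M (\<lambda>z. c * f z) g = c * l2ip M f g"
  unfolding l2ip_def by (simp add: mult.assoc)

lemma ip_add_left: "f \<in> H \<Longrightarrow> g \<in> H \<Longrightarrow> h \<in> H \<Longrightarrow>
   l2ip M (\<lambda>z. f z + g z) h = l2ip M f h + l2ip M g h"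
  unfolding l2ip_def using ip_integrable by (simp add: distrib_right)

lemma ip_diff_left: "f \<in> H \<Longrightarrow> g \<in> H \<Longrightarrow> h \<in> H \<Longrightarrow>
   l2ip M (\<lambda>z. f z - g z) h = l2ip M f h - l2ip M g h"
  unfolding l2ip_def using ip_integrable by (simp add: left_diff_distrib)

lemma Qn_scale: "Qn M (\<lambda>z. c * f z) = (cmod c)^2 * Qn M f"
  unfolding Qn_def by (simp add: norm_mult power_mult_distrib)

lemma Qn_expand: assumes "f \<in> H" "g \<in> H"
  shows "Qn M (\<lambda>z. f z + g z) = Qn M f + Qn M g + 2 * Re (l2ip M f g)"
proof -
  have r: "(LINT z|M. Re (f z * cnj (g z))) = Re (l2ip M f g)"
    unfolding l2ip_def by (rule integral_Re) (rule ip_integrable[OF assms])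
  have "Qn M (\<lambda>z. f z + g z) = (LINT z|M. (cmod (f z))^2 + (cmod (g z))^2 + 2 * Re (f z * cnj (g z)))"
    unfolding Qn_def by (simp add: pw_expand)
  also have "\<dots> = Qn M f + Qn M g + 2 * (LINT z|M. Re (f z * cnj (g z)))"
    unfolding Qn_def by (rule lin3[OF H_sq[OF assms(1)] H_sq[OF assms(2)] integrable_Re[OF ip_integrable[OF assms]]])
  finally show ?thesis unfolding r .
qed

lemma Qn_par: assumes "f \<in> H" "g \<in> H"
  shows "Qn M (\<lambda>z. f z - g z) = 2 * Qn M f + 2 * Qn M g - 4 * Qn M (\<lambda>z. of_real (1/2) * (f z + g z))"
proof -
  have "(\<lambda>z. of_real (1/2) * (f z + g z)) \<in> H" using assms H_add H_scale by blast
  then have i: "integrable M (\<lambda>z. (cmod (of_real (1/2) * (f z + g z)))^2)" by (rule H_sq)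
  have e: "(\<lambda>z. (cmod (f z - g z))^2) = (\<lambda>z. 2*(cmod (f z))^2 + 2*(cmod (g z))^2 - 4 * (cmod (of_real (1/2) * (f z + g z)))^2)"
    by (simp only: pw_par)
  show ?thesis
    unfolding Qn_def e by (rule lin3'[OF H_sq[OF assms(1)] H_sq[OF assms(2)] i])
qed

lemma CS: assumes "f \<in> H" "g \<in> H"
  shows "cmod (l2ip M f g) \<le> l2norm M f * l2norm M g"
proof -
  have "cmod (l2ip M f g) \<le> (LINT z|M. cmod (f z) * cmod (g z))"
    unfolding l2ip_def using integral_norm_bound[of M "\<lambda>z. f z * cnj (g z)"] by (simp add: norm_mult)
  also have "\<dots> \<le> sqrt (Qn M f) * sqrt (Qn M g)"
  proof (rule real_amgm_inf[OF Qn_nonneg Qn_nonneg])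
    fix t :: real assume t: "t > 0"
    have i: "integrable M (\<lambda>z. cmod (f z) * cmod (g z))"
      using integrable_norm[OF ip_integrable[OF assms]] by (simp add: norm_mult)
    have "(LINT z|M. cmod (f z) * cmod (g z)) \<le> (LINT z|M. (t * (cmod (f z))^2 + (cmod (g z))^2 / t) / 2)"
      using i H_sq assms pw_amgm[OF t]
      by (intro integral_mono) auto
    also have "\<dots> = (t * Qn M f + Qn M g / t) / 2"
      unfolding Qn_def using H_sq assms by simp
    finally show "(LINT z|M. cmod (f z) * cmod (g z)) \<le> (t * Qn M f + Qn M g / t) / 2" .
  qed
  finally show ?thesis by (simp add: l2norm_Qn)
qed

lemma triangle: assumes "f \<in> H" "g \<in> H"
  shows "l2norm M (\<lambda>z. f z + g z) \<le> l2norm M f + l2norm M g"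
proof -
  have "Qn M (\<lambda>z. f z + g z) \<le> Qn M f + Qn M g + 2 * (l2norm M f * l2norm M g)"
    using Qn_expand[OF assms] CS[OF assms] complex_Re_le_cmod[of "l2ip M f g"] by linarith
  also have "\<dots> = (l2norm M f + l2norm M g)^2"
    by (simp add: Qn_l2norm power2_eq_square algebra_simps)
  finally have "(l2norm M (\<lambda>z. f z + g z))^2 \<le> (l2norm M f + l2norm M g)^2"
    by (simp add: Qn_l2norm)
  then show ?thesis
    by (rule power2_le_imp_le) (simp add: l2norm_def)
qed

lemma l2norm_nonneg: "l2norm M f \<ge> 0"
  by (simp add: l2norm_def)

lemma l2norm_commute: "l2norm M (\<lambda>z. f z - g z) = l2norm M (\<lambda>z. g z - f z)"
  unfolding l2norm_def by (simp add: norm_minus_commute)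

lemma riesz:
  fixes phi :: "('a \<Rightarrow> complex) \<Rightarrow> complex"
  assumes padd: "\<And>f g. f \<in> H \<Longrightarrow> g \<in> H \<Longrightarrow> phi (\<lambda>z. f z + g z) = phi f + phi g"
    and pscale: "\<And>c f. f \<in> H \<Longrightarrow> phi (\<lambda>z. c * f z) = c * phi f"
    and pbnd: "\<And>f. f \<in> H \<Longrightarrow> cmod (phi f) \<le> C * l2norm M f"
  shows "\<exists>g\<in>H. \<forall>f\<in>H. phi f = l2ip M f g"
proof (cases "\<exists>h\<in>H. phi h \<noteq> 0")
  case False
  show ?thesis
  proof (intro bexI[of _ "\<lambda>z. 0"] ballI)
    fix f assume "f \<in> H" then show "phi f = l2ip M f (\<lambda>z. 0)"
      using False unfolding l2ip_def by simp
  qed (rule H_zero)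
next
  case True
  have pdiff: "phi (\<lambda>z. f z - g z) = phi f - phi g" if "f \<in> H" "g \<in> H" for f g
  proof -
    have e1: "phi (\<lambda>z. f z + (-1) * g z) = phi f + phi (\<lambda>z. (-1) * g z)"
      by (rule padd[OF that(1) H_scale[OF that(2)]])
    have e2: "phi (\<lambda>z. (-1) * g z) = (-1) * phi g" by (rule pscale[OF that(2)])
    have e3: "(\<lambda>z. f z - g z) = (\<lambda>z. f z + (-1) * g z)" by simp
    show ?thesis unfolding e3 e1 e2 by simp
  qed
  from True obtain h where h: "h \<in> H" "phi h \<noteq> 0" by blast
  define h1 where "h1 = (\<lambda>z. (1 / phi h) * h z)"
  have h1: "h1 \<in> H" "phi h1 = 1" unfolding h1_def
    by (rule H_scale[OF h(1)]) (simp only: pscale[OF h(1)], use h(2) in simp)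
  define A where "A = {f\<in>H. phi f = 1}"
  define d where "d = Inf (Qn M ` A)"
  have Ane: "Qn M ` A \<noteq> {}" using h1 unfolding A_def by auto
  have bdd: "bdd_below (Qn M ` A)" by (rule bdd_belowI[of _ 0]) (auto simp: Qn_nonneg)
  have dle: "d \<le> Qn M f" if "f \<in> A" for f
    unfolding d_def using bdd that by (auto intro: cInf_lower)
  have d0: "d \<ge> 0" using Ane Qn_nonneg unfolding d_def by (auto intro: cInf_greatest)
  have "\<exists>f\<in>A. Qn M f < d + 1 / real (Suc n)" for n
  proof -
    have "Inf (Qn M ` A) < d + 1 / real (Suc n)" unfolding d_def by simp
    then obtain x where "x \<in> Qn M ` A" "x < d + 1 / real (Suc n)" using cInf_lessD[OF Ane] by blast
    then show ?thesis by auto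
  qed
  then obtain s where s: "\<And>n. s n \<in> A" "\<And>n. Qn M (s n) < d + 1 / real (Suc n)" by metis
  have sH: "s n \<in> H" for n using s(1) unfolding A_def by auto
  have sphi: "phi (s n) = 1" for n using s(1) unfolding A_def by auto
  have Qdiff: "Qn M (\<lambda>z. s m z - s n z) \<le> 2 / real (Suc m) + 2 / real (Suc n)" for m n
  proof -
    have m1: "(\<lambda>z. s m z + s n z) \<in> H" by (rule H_add[OF sH sH])
    have m2: "(\<lambda>z. of_real (1/2) * (s m z + s n z)) \<in> H" by (rule H_scale[OF m1])
    have "phi (\<lambda>z. of_real (1/2) * (s m z + s n z)) = of_real (1/2) * phi (\<lambda>z. s m z + s n z)"
      by (rule pscale[OF m1])
    also have "\<dots> = 1" using padd[OF sH sH, of m n] sphi by simp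
    finally have "(\<lambda>z. of_real (1/2) * (s m z + s n z)) \<in> A"
      unfolding A_def using m2 by blast
    then have "d \<le> Qn M (\<lambda>z. of_real (1/2) * (s m z + s n z))" by (rule dle)
    then show ?thesis using Qn_par[OF sH sH, of m n] s(2)[of m] s(2)[of n] by linarith
  qed
  have cauchy: "\<exists>N. \<forall>m\<ge>N. \<forall>n\<ge>N. l2norm M (\<lambda>z. s m z - s n z) < e" if e: "e > 0" for e
  proof -
    obtain N :: nat where N: "4 / (e*e) < real (Suc N)"
      using reals_Archimedean2[of "4 / (e*e)"] by (metis less_trans lessI of_nat_less_iff)
    have "4 / real (Suc N) < e * e"
      using N e by (simp add: field_simps)
    show ?thesis
    proof (intro exI allI impI)
      fix m n assume mn: "N \<le> m" "N \<le> n"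
      have "2 / real (Suc m) \<le> 2 / real (Suc N)" "2 / real (Suc n) \<le> 2 / real (Suc N)"
        using mn by (auto simp: frac_le)
      then have "Qn M (\<lambda>z. s m z - s n z) < e * e"
        using Qdiff[of m n] \<open>4 / real (Suc N) < e * e\<close> by linarith
      then have "sqrt (Qn M (\<lambda>z. s m z - s n z)) < sqrt (e * e)"
        by (simp only: real_sqrt_less_iff)
      then show "l2norm M (\<lambda>z. s m z - s n z) < e" using e by (simp add: l2norm_Qn)
    qed
  qed
  obtain h0 where h0: "h0 \<in> H" "(\<lambda>n. l2norm M (\<lambda>z. s n z - h0 z)) \<longlonglongrightarrow> 0"
    using H_complete[OF sH cauchy] by blast
  have lim0: "(\<lambda>n. C * l2norm M (\<lambda>z. s n z - h0 z)) \<longlonglongrightarrow> 0"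
    using tendsto_mult_right_zero[OF h0(2)] by simp
  have "cmod (1 - phi h0) \<le> C * l2norm M (\<lambda>z. s n z - h0 z)" for n
    using pbnd[OF H_diff[OF sH h0(1)]] pdiff[OF sH h0(1)] sphi by simp
  then have "cmod (1 - phi h0) \<le> 0"
    by (intro LIMSEQ_le_const[OF lim0]) auto
  then have ph0: "phi h0 = 1" by simp
  then have h0A: "h0 \<in> A" unfolding A_def using h0 by auto
  have lim1: "(\<lambda>n. sqrt (d + 1 / real (Suc n)) + l2norm M (\<lambda>z. s n z - h0 z)) \<longlonglongrightarrow> sqrt (d + 0) + 0"
    by (intro tendsto_intros h0(2) LIMSEQ_Suc[OF lim_const_over_n] tendsto_add) 
  have "l2norm M h0 \<le> sqrt (d + 1 / real (Suc n)) + l2norm M (\<lambda>z. s n z - h0 z)" for n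
  proof -
    have "h0 = (\<lambda>z. s n z + (h0 z - s n z))" by simp
    then have "l2norm M h0 \<le> l2norm M (s n) + l2norm M (\<lambda>z. h0 z - s n z)"
      using triangle[OF sH H_diff[OF h0(1) sH]] by metis
    moreover have "l2norm M (s n) \<le> sqrt (d + 1 / real (Suc n))"
      using s(2)[of n] by (simp add: l2norm_Qn)
    ultimately show ?thesis using l2norm_commute[of h0 "s n"] by linarith
  qed
  then have "l2norm M h0 \<le> sqrt d"
    by (intro LIMSEQ_le_const[OF lim1[simplified]]) auto
  then have "Qn M h0 \<le> d" using d0 by (simp add: Qn_l2norm) (metis l2norm_nonneg power_mono real_sqrt_pow2)
  then have Qh0: "Qn M h0 = d" using dle[OF h0A] by linarith
  have Qpos: "Qn M h0 > 0"
  proof (rule ccontr)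
    assume "\<not> Qn M h0 > 0"
    then have "l2norm M h0 = 0" using Qn_nonneg[of h0] by (simp add: l2norm_Qn)
    then show False using pbnd[OF h0(1)] ph0 by simp
  qed
  have orth: "l2ip M h0 k = 0" if k: "k \<in> H" "phi k = 0" for k
  proof -
    define a where "a = l2ip M h0 k"
    define ep where "ep = 1 / (Qn M k + 1)"
    have ep: "ep > 0" "ep * Qn M k < 1"
      unfolding ep_def using Qn_nonneg[of k] by (auto simp: field_simps)
    define t where "t = - of_real ep * a"
    have gH: "(\<lambda>z. t * k z) \<in> H" using k H_scale by auto
    have "phi (\<lambda>z. h0 z + t * k z) = 1"
      unfolding padd[OF h0(1) gH] pscale[OF k(1)] ph0 k(2) by simp
    then have "(\<lambda>z. h0 z + t * k z) \<in> A"
      unfolding A_def using H_add[OF h0(1) gH] by blast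
    then have "Qn M h0 \<le> Qn M (\<lambda>z. h0 z + t * k z)" using dle Qh0 by auto
    also have "\<dots> = Qn M h0 + (cmod t)^2 * Qn M k + 2 * Re (cnj t * a)"
      using Qn_expand[OF h0(1) gH] Qn_scale ip_scale_right unfolding a_def by simp
    also have "(cmod t)^2 = ep^2 * (cmod a)^2"
      unfolding t_def using ep by (simp add: norm_mult power_mult_distrib)
    also have "Re (cnj t * a) = - ep * (cmod a)^2"
      unfolding t_def cmod_power2 by (simp add: power2_eq_square algebra_simps)
    finally have "0 \<le> ep * (cmod a)^2 * (ep * Qn M k - 2)"
      by (simp add: algebra_simps power2_eq_square)
    moreover have "ep * Qn M k - 2 < 0" using ep by linarith
    ultimately have "ep * (cmod a)^2 \<le> 0"
      using zero_le_mult_iff[of "ep * (cmod a)^2" "ep * Qn M k - 2"] by linarith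
    then have "(cmod a)^2 \<le> 0" using ep(1) by (simp add: mult_le_0_iff)
    then show ?thesis unfolding a_def by simp
  qed
  define g where "g = (\<lambda>z. of_real (1 / Qn M h0) * h0 z)"
  show ?thesis
  proof (intro bexI[of _ g] ballI)
    show "g \<in> H" unfolding g_def by (rule H_scale[OF h0(1)])
    fix f assume f: "f \<in> H"
    define w where "w = (\<lambda>z. f z - phi f * h0 z)"
    have wH: "w \<in> H" unfolding w_def by (rule H_diff[OF f H_scale[OF h0(1)]])
    have "phi w = 0" unfolding w_def using pdiff[OF f H_scale[OF h0(1)]] pscale[OF h0(1)] ph0 by simp
    then have "l2ip M h0 w = 0" using orth wH by auto
    then have "l2ip M w h0 = 0" using ip_cnj[of w h0] by simp
    moreover have "l2ip M w h0 = l2ip M f h0 - phi f * of_real (Qn M h0)"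
      unfolding w_def using ip_diff_left[OF f H_scale[OF h0(1)] h0(1)] ip_scale_left ip_self by simp
    ultimately have "l2ip M f h0 = phi f * of_real (Qn M h0)" by simp
    then show "phi f = l2ip M f g"
      unfolding g_def using ip_scale_right[of f "of_real (1 / Qn M h0)" h0] Qpos by simp
  qed
qed

end


theorem proposition5p13:
  fixes nu :: "'g::{topological_ab_group_add,t2_space} measure"
    and lam :: "'y measure"
    and H :: "('g \<times> 'y \<Rightarrow> complex) set"
    and K :: "'g \<times> 'y \<Rightarrow> 'g \<times> 'y \<Rightarrow> complex"
    and T :: "('g \<times> 'y \<Rightarrow> complex) \<Rightarrow> ('g \<times> 'y \<Rightarrow> complex)"
  assumes "locally_compact_space (euclidean :: 'g topology)"
    and "haar_measure nu"
    and "space lam = UNIV"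
    and "rkhs_L2 (nu \<Otimes>\<^sub>M lam) H K"
    and "\<And>u x v y. K (x, y) (u, v) = K (0, y) (u - x, v)"
    and "T \<in> commutant_rho (nu \<Otimes>\<^sub>M lam) H"
  defines "psi \<equiv> (\<lambda>u v y. T (K (0, y)) (u, v))"
  shows "psi \<in> A_class (nu \<Otimes>\<^sub>M lam) H \<and> (\<forall>f \<in> H. T f = S_psi (nu \<Otimes>\<^sub>M lam) psi f)"
proof -
  define M where "M = nu \<Otimes>\<^sub>M lam"
  have rk: "rkhs_L2 M H K" using assms(4) unfolding M_def .
  have Tc: "T \<in> commutant_rho M H" using assms(6) unfolding M_def .
  have TH: "\<And>f. f \<in> H \<Longrightarrow> T f \<in> H"
    and Tadd: "\<And>f g. f \<in> H \<Longrightarrow> g \<in> H \<Longrightarrow> T (\<lambda>z. f z + g z) = (\<lambda>z. T f z + T g z)"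
    and Tscale: "\<And>c f. f \<in> H \<Longrightarrow> T (\<lambda>z. c * f z) = (\<lambda>z. c * T f z)"
    and Trho: "\<And>a f. f \<in> H \<Longrightarrow> T (rho a f) = rho a (T f)"
    using Tc unfolding commutant_rho_def bounded_op_def by auto
  obtain C where TC: "\<And>f. f \<in> H \<Longrightarrow> l2norm M (T f) \<le> C * l2norm M f"
    using Tc unfolding commutant_rho_def bounded_op_def by blast
  have "\<exists>g\<in>H. \<forall>f\<in>H. T f q = l2ip M f g" for q
  proof (rule riesz[OF rk, of "\<lambda>f. T f q" "C * l2norm M (K q)"])
    fix f g assume "f \<in> H" "g \<in> H"
    then show "T (\<lambda>z. f z + g z) q = T f q + T g q" using Tadd by simp
  next
    fix c f assume "f \<in> H"
    then show "T (\<lambda>z. c * f z) q = c * T f q" using Tscale by simp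
  next
    fix f assume f: "f \<in> H"
    have "cmod (T f q) = cmod (l2ip M (T f) (K q))" using H_repr[OF rk TH[OF f]] by simp
    also have "\<dots> \<le> l2norm M (T f) * l2norm M (K q)" by (rule CS[OF rk TH[OF f] H_K[OF rk]])
    also have "\<dots> \<le> (C * l2norm M f) * l2norm M (K q)"
      by (rule mult_right_mono[OF TC[OF f] l2norm_nonneg[OF rk]])
    finally show "cmod (T f q) \<le> C * l2norm M (K q) * l2norm M f" by (simp add: ac_simps)
  qed
  then obtain G where G: "\<And>q. G q \<in> H" "\<And>q f. f \<in> H \<Longrightarrow> T f q = l2ip M f (G q)"
    by metis
  have Krho: "K (u, v) = rho u (K (0, v))" for u v
  proof
    fix p :: "'g \<times> 'y"
    show "K (u, v) p = rho u (K (0, v)) p"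
      by (cases p) (simp add: rho_def, rule assms(5))
  qed
  have TK: "T (K (u, v)) (x, y) = T (K (0, v)) (x - u, y)" for u v x y
  proof -
    have "T (K (u, v)) = rho u (T (K (0, v)))"
      by (subst Krho) (rule Trho[OF H_K[OF rk]])
    then show ?thesis by (simp add: rho_def)
  qed
  have Gval: "G q p = cnj (T (K p) q)" for q p
  proof -
    have "G q p = l2ip M (G q) (K p)" by (rule H_repr[OF rk G(1)])
    also have "\<dots> = cnj (l2ip M (K p) (G q))" by (rule ip_cnj[OF rk])
    also have "\<dots> = cnj (T (K p) q)" using G(2)[OF H_K[OF rk]] by simp
    finally show ?thesis .
  qed
  have main: "T f = S_psi M psi f" if f: "f \<in> H" for f
  proof
    fix q :: "'g \<times> 'y"
    obtain x y where q: "q = (x, y)" by force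
    have "T f q = l2ip M f (G q)" by (rule G(2)[OF f])
    also have "\<dots> = (CLINT z|M. f z * psi (x - fst z) y (snd z))"
      unfolding l2ip_def
    proof (rule Bochner_Integration.integral_cong[OF refl])
      fix z :: "'g \<times> 'y"
      obtain a b where z: "z = (a, b)" by force
      show "f z * cnj (G q z) = f z * psi (x - fst z) y (snd z)"
        unfolding Gval q psi_def z using TK[of a b x y] by simp
    qed
    also have "\<dots> = S_psi M psi f q" unfolding S_psi_def q by simp
    finally show "T f q = S_psi M psi f q" .
  qed
  have A0: "psi \<in> A0 H"
    unfolding A0_def
  proof (intro CollectI conjI allI)
    fix v
    have "(\<lambda>(u, w). psi u w v) = T (K (0, v))" unfolding psi_def by (simp add: fun_eq_iff)
    then show "(\<lambda>(u, w). psi u w v) \<in> H" using TH[OF H_K[OF rk]] by simp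
  next
    fix y
    have "(\<lambda>(u, v). cnj (psi (- u) y v)) = G (0, y)"
    proof (rule ext)
      fix z :: "'g \<times> 'y"
      obtain u v where z: "z = (u, v)" by force
      show "(\<lambda>(u, v). cnj (psi (- u) y v)) z = G (0, y) z"
        unfolding psi_def Gval z using TK[of u v 0 y] by simp
    qed
    then show "(\<lambda>(u, v). cnj (psi (- u) y v)) \<in> H" using G(1) by simp
  qed
  have bo: "bounded_op M H (S_psi M psi)"
  proof -
    have "bounded_op M H T" using Tc unfolding commutant_rho_def by auto
    moreover have "\<And>f g. f \<in> H \<Longrightarrow> g \<in> H \<Longrightarrow> S_psi M psi (\<lambda>z. f z + g z) = T (\<lambda>z. f z + g z)"
      using main H_add[OF rk] by auto
    moreover have "\<And>c f. f \<in> H \<Longrightarrow> S_psi M psi (\<lambda>z. c * f z) = T (\<lambda>z. c * f z)"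
      using main H_scale[OF rk] by auto
    ultimately show ?thesis unfolding bounded_op_def using main by auto
  qed
  show ?thesis using A0 bo main unfolding A_class_def M_def by auto
qed

end
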